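(* Let $(\Omega,\mathcal{F},\mathbb{P})$ be a probability space, let $\rho$ be a random variable on it with $\rho>0$ almost surely, $\mathbb{E}[\rho]<\infty$, and continuous CDF $F_\rho$ (i.e. $\rho$ has no atom), and set $\delta:=\mathbb{E}[\rho]$ and $\underline{\rho}:=\operatorname{essinf}\rho$. Let $m$ be a probability measure on $[0,1]$ and $x>0$. For a random variable $X$ define $$V(X):=\int_{[0,1]}F_X^{-1}(z)\,m(dz),$$ where $F_X^{-1}$ is the right-continuous quantile function of $X$, with $F_X^{-1}(0):=\lim_{z\downarrow0}F_X^{-1}(z)$ and $F_X^{-1}(1):=\lim_{z\uparrow1}F_X^{-1}(z)$. Consider the problem $$(P)\qquad \text{maximize } V(X)\ \text{ over random variables } X \text{ subject to } \mathbb{E}[\rho X]\le x,\ X\ge 0.$$ For $c\in(0,1)$ let $$\zeta(c):=\frac{m([c,1])}{\int_c^1F_\rho^{-1}(1-z)\,dz},\qquad \gamma^*:=\sup_{c\in(0,1)}\zeta(c).$$ Then the optimal value of $(P)$ is $\max(1/\delta,\gamma^* )\,x$. Furthermore: (i) If $\gamma^*=+\infty$, there exist $\beta_n\to\underline{\rho}$ such that $X_n:=k_n\mathbf{1}_{\{\rho\le\beta_n\}}$ with $k_n:=x/\mathbb{E}[\rho\mathbf{1}_{\{\rho\le\beta_n\}}]$ is feasible for $(P)$ and $V(X_n)\to+\infty$ as $n\to\infty$. (ii) If $\gamma^*\le 1/\delta$, then $X^*\equiv x/\delta$ is optimal for $(P)$. (iii) If $1/\delta<\gamma^*<+\infty$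 and the supremum defining $\gamma^*$ is attained at some $c^*\in(0,1)$, then $X^*:=k^*\mathbf{1}_{\{\rho\le\beta^*\}}$ with $\beta^*:=F_\rho^{-1}(1-c^* )$ and $k^*:=x/\mathbb{E}[\rho\mathbf{1}_{\{\rho\le\beta^*\}}]$ is optimal for $(P)$. (iv) If $1/\delta<\gamma^*<+\infty$ and the supremum defining $\gamma^*$ is not attained, then $(P)$ has no optimal solution. Furthermore, for any sequence $c_n\in(0,1)$ with $\zeta(c_n)\to\gamma^*$, setting $\beta_n:=F_\rho^{-1}(1-c_n)$, the payoffs $X_n:=k_n\mathbf{1}_{\{\rho\le\beta_n\}}$ with $k_n:=x/\mathbb{E}[\rho\mathbf{1}_{\{\rho\le\beta_n\}}]$ are feasible for $(P)$ and $V(X_n)$ converges to the optimal value as $n\to\infty$.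
   Context: $\rho$ is interpreted as the pricing kernel of a single-period complete market and $x$ as initial wealth. $F_\rho^{-1}$ denotes the right-continuous quantile function of $\rho$ (right-continuous inverse of its CDF). *)

theory Defs
  imports "HOL-Probability.Probability"
begin

definition cdfX :: "'a measure \<Rightarrow> ('a \<Rightarrow> real) \<Rightarrow> real \<Rightarrow> real" where
  "cdfX M X t = measure M {\<omega> \<in> space M. X \<omega> \<le> t}"

text \<open>Right-continuous quantile function, extended-real valued:
  for z in (0,1) it is inf {t. F t > z}; at 0 and 1 it is the limit from the right/left,
  which for the monotone quantile equals the inf/sup over (0,1).\<close>
definition quantile :: "'a measure \<Rightarrow> ('a \<Rightarrow> real) \<Rightarrow> real \<Rightarrow> ereal" where
  "quantile M X z =
     (if 0 < z \<and> z < 1 then ereal (Inf {t. cdfX M X t > z})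
      else if z = 0 then (INF u\<in>{0<..<1}. ereal (Inf {t. cdfX M X t > u}))
      else if z = 1 then (SUP u\<in>{0<..<1}. ereal (Inf {t. cdfX M X t > u}))
      else 0)"

definition essinf :: "'a measure \<Rightarrow> ('a \<Rightarrow> real) \<Rightarrow> ereal" where
  "essinf M f = Sup {z::ereal. AE \<omega> in M. z \<le> ereal (f \<omega>)}"

text \<open>Objective V(X) = integral over [0,1] of the quantile of X w.r.t. m
  (used for nonnegative X, whose quantile is nonnegative).\<close>
definition Vobj :: "real measure \<Rightarrow> 'a measure \<Rightarrow> ('a \<Rightarrow> real) \<Rightarrow> ennreal" where
  "Vobj m M X = (\<integral>\<^sup>+ z \<in> {0..1}. e2ennreal (quantile M X z) \<partial>m)"

definition feasible :: "'a measure \<Rightarrow> ('a \<Rightarrow> real) \<Rightarrow> real \<Rightarrow> ('a \<Rightarrow> real) \<Rightarrow> bool" where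
  "feasible M \<rho> x X \<longleftrightarrow> X \<in> borel_measurable M \<and> (AE \<omega> in M. X \<omega> \<ge> 0)
     \<and> (\<integral>\<^sup>+ \<omega>. ennreal (\<rho> \<omega> * X \<omega>) \<partial>M) \<le> ennreal x"

definition optval :: "real measure \<Rightarrow> 'a measure \<Rightarrow> ('a \<Rightarrow> real) \<Rightarrow> real \<Rightarrow> ennreal" where
  "optval m M \<rho> x = (SUP X \<in> {X. feasible M \<rho> x X}. Vobj m M X)"

definition optimal :: "real measure \<Rightarrow> 'a measure \<Rightarrow> ('a \<Rightarrow> real) \<Rightarrow> real \<Rightarrow> ('a \<Rightarrow> real) \<Rightarrow> bool" where
  "optimal m M \<rho> x X \<longleftrightarrow> feasible M \<rho> x X \<and>
     (\<forall>Y. feasible M \<rho> x Y \<longrightarrow> Vobj m M Y \<le> Vobj m M X)"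

definition zeta :: "real measure \<Rightarrow> 'a measure \<Rightarrow> ('a \<Rightarrow> real) \<Rightarrow> real \<Rightarrow> real" where
  "zeta m M \<rho> c = measure m {c..1} / (LBINT z=c..1. real_of_ereal (quantile M \<rho> (1 - z)))"

definition gammastar :: "real measure \<Rightarrow> 'a measure \<Rightarrow> ('a \<Rightarrow> real) \<Rightarrow> ereal" where
  "gammastar m M \<rho> = (SUP c\<in>{0<..<1}. ereal (zeta m M \<rho> c))"

definition digital :: "'a measure \<Rightarrow> ('a \<Rightarrow> real) \<Rightarrow> real \<Rightarrow> real \<Rightarrow> 'a \<Rightarrow> real" where
  "digital M \<rho> x \<beta> = (\<lambda>\<omega>. (x / (\<integral>\<omega>'. \<rho> \<omega>' * indicator {\<omega>'\<in>space M. \<rho> \<omega>' \<le> \<beta>} \<omega>' \<partial>M))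
       * indicator {\<omega>'\<in>space M. \<rho> \<omega>' \<le> \<beta>} \<omega>)"

end

theory Submission
  imports Defs
begin

definition Qf :: "'a measure \<Rightarrow> ('a \<Rightarrow> real) \<Rightarrow> real \<Rightarrow> real" where
  "Qf M X u = Inf {t. cdfX M X t > u}"

lemma quantile_in01: "0 < u \<Longrightarrow> u < 1 \<Longrightarrow> quantile M X u = ereal (Qf M X u)"
  by (simp add: quantile_def Qf_def)

lemma quantile_0: "quantile M X 0 = (INF u\<in>{0<..<1}. ereal (Qf M X u))"
  by (simp add: quantile_def Qf_def)

lemma quantile_1: "quantile M X 1 = (SUP u\<in>{0<..<1}. ereal (Qf M X u))"
  by (simp add: quantile_def Qf_def)

context prob_space
begin


lemma cdfX_eq_cdf:
  assumes X: "X \<in> borel_measurable M"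
  shows "cdfX M X = cdf (distr M borel X)"
proof
  fix t
  show "cdfX M X t = cdf (distr M borel X) t"
    unfolding cdfX_def cdf_def using X
    by (subst measure_distr) (auto simp: vimage_def Int_def conj_commute)
qed

lemma cdfX_mono:
  assumes X: "X \<in> borel_measurable M" and "s \<le> t"
  shows "cdfX M X s \<le> cdfX M X t"
proof -
  interpret D: real_distribution "distr M borel X" using X by (rule real_distribution_distr)
  show ?thesis using assms D.cdf_nondecreasing by (simp add: cdfX_eq_cdf[OF X])
qed

lemma cdfX_bounds:
  assumes X: "X \<in> borel_measurable M"
  shows "0 \<le> cdfX M X t" "cdfX M X t \<le> 1"
  by (simp_all add: cdfX_def)

lemma cdfX_lim_bot:
  assumes X: "X \<in> borel_measurable M"
  shows "(cdfX M X \<longlongrightarrow> 0) at_bot"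
proof -
  interpret D: real_distribution "distr M borel X" using X by (rule real_distribution_distr)
  show ?thesis using D.cdf_lim_at_bot by (simp add: cdfX_eq_cdf[OF X])
qed

lemma cdfX_lim_top:
  assumes X: "X \<in> borel_measurable M"
  shows "(cdfX M X \<longlongrightarrow> 1) at_top"
proof -
  interpret D: real_distribution "distr M borel X" using X by (rule real_distribution_distr)
  show ?thesis using D.cdf_lim_at_top_prob by (simp add: cdfX_eq_cdf[OF X])
qed

lemma Qf_set_ne:
  assumes X: "X \<in> borel_measurable M" and "u < 1"
  shows "{t. cdfX M X t > u} \<noteq> {}"
proof -
  have "eventually (\<lambda>t. cdfX M X t > u) at_top"
    using order_tendstoD(1)[OF cdfX_lim_top[OF X] \<open>u < 1\<close>] .
  then obtain t where "cdfX M X t > u" using eventually_happens' trivial_limit_at_top_linorder by blast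
  then show ?thesis by auto
qed

lemma Qf_set_bdd:
  assumes X: "X \<in> borel_measurable M" and "0 < u"
  shows "bdd_below {t. cdfX M X t > u}"
proof -
  have "eventually (\<lambda>t. cdfX M X t < u) at_bot"
    using order_tendstoD(2)[OF cdfX_lim_bot[OF X] \<open>0 < u\<close>] .
  then obtain y where y: "cdfX M X y < u" using eventually_happens' trivial_limit_at_bot_linorder by blast
  show ?thesis
  proof (rule bdd_belowI[of _ y])
    fix t assume "t \<in> {t. cdfX M X t > u}"
    then have "cdfX M X t > u" by simp
    show "y \<le> t"
    proof (rule ccontr)
      assume "\<not> y \<le> t"
      then have "cdfX M X t \<le> cdfX M X y" using cdfX_mono[OF X, of t y] by simp
      with y \<open>cdfX M X t > u\<close> show False by simp
    qed
  qed
qed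

lemma Qf_le:
  assumes X: "X \<in> borel_measurable M" and "0 < u" and "cdfX M X t > u"
  shows "Qf M X u \<le> t"
  unfolding Qf_def using assms Qf_set_bdd[OF X] by (auto intro!: cInf_lower)

lemma le_Qf:
  assumes X: "X \<in> borel_measurable M" and "u < 1" and "cdfX M X t \<le> u"
  shows "t \<le> Qf M X u"
  unfolding Qf_def
proof (rule cInf_greatest)
  show "{t. cdfX M X t > u} \<noteq> {}" using Qf_set_ne[OF X \<open>u < 1\<close>] .
  fix s assume "s \<in> {t. u < cdfX M X t}"
  then have "cdfX M X s > u" by simp
  show "t \<le> s"
  proof (rule ccontr)
    assume "\<not> t \<le> s"
    then have "cdfX M X s \<le> cdfX M X t" using cdfX_mono[OF X, of s t] by simp
    with assms \<open>cdfX M X s > u\<close> show False by simp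
  qed
qed

lemma Qf_less_imp:
  assumes X: "X \<in> borel_measurable M" and "0 < u" and "t < Qf M X u"
  shows "cdfX M X t \<le> u"
  using Qf_le[OF X \<open>0<u\<close>, of t] assms by force

lemma Qf_mono:
  assumes X: "X \<in> borel_measurable M" and "0 < u" "u \<le> v" "v < 1"
  shows "Qf M X u \<le> Qf M X v"
  unfolding Qf_def
  using assms Qf_set_ne[OF X \<open>v<1\<close>] Qf_set_bdd[OF X \<open>0<u\<close>]
  by (intro cInf_superset_mono) auto

lemma Qf_mono_on: "X \<in> borel_measurable M \<Longrightarrow> mono_on {0<..<1} (Qf M X)"
  by (auto simp: mono_on_def intro!: Qf_mono)

lemma quantile_measurable:
  assumes X: "X \<in> borel_measurable M"
  shows "quantile M X \<in> borel_measurable borel"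
proof -
  have eq: "quantile M X = (\<lambda>z. if z \<in> {0<..<1} then ereal (Qf M X z) else
     (if z = 0 then quantile M X 0 else if z = 1 then quantile M X 1 else 0))"
    by (auto simp: quantile_def Qf_def fun_eq_iff)
  have m1: "Qf M X \<in> borel_measurable (restrict_space borel {0<..<1})"
    by (rule borel_measurable_mono_on_fnc[OF Qf_mono_on[OF X]])
  show ?thesis
  proof (subst eq, subst measurable_If_restrict_space_iff, simp, intro conjI)
    show "(\<lambda>x. ereal (Qf M X x)) \<in> borel_measurable (restrict_space borel {x. x \<in> {0<..<1}})"
    proof -
      have "{x. x \<in> {0<..<1::real}} = {0<..<1}" by auto
      then show ?thesis using borel_measurable_ereal[OF m1] by simp
    qed
    show "(\<lambda>z::real. if z = 0 then quantile M X 0 else if z = 1 then quantile M X 1 else 0)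
       \<in> borel_measurable (restrict_space borel {x. x \<notin> {0<..<1}})"
      by (rule measurable_restrict_space1) (intro measurable_If measurable_const; simp add: borel_closed)
  qed
qed

end

locale setting = prob_space M for M :: "'a measure" +
  fixes \<rho> :: "'a \<Rightarrow> real"
  assumes rho_meas[measurable]: "\<rho> \<in> borel_measurable M"
    and rho_pos: "AE \<omega> in M. \<rho> \<omega> > 0"
    and rho_int: "integrable M \<rho>"
    and rho_cont: "continuous_on UNIV (cdfX M \<rho>)"
begin

abbreviation "F \<equiv> cdfX M \<rho>"
abbreviation "Q \<equiv> Qf M \<rho>"

lemma F_isCont: "isCont F y"
  using rho_cont continuous_on_eq_continuous_at[OF open_UNIV] by blast

lemma F_Q:
  assumes u: "0 < u" "u < 1"
  shows "F (Q u) = u"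
proof (rule antisym)
  let ?q = "Q u"
  show "F ?q \<le> u"
  proof (rule ccontr)
    assume "\<not> F ?q \<le> u"
    then have e: "F ?q - u > 0" by simp
    obtain d where d: "d > 0" "\<And>x'. dist x' ?q < d \<Longrightarrow> dist (F x') (F ?q) < F ?q - u"
      using F_isCont[of ?q] e unfolding continuous_at_eps_delta by blast
    have "dist (?q - d/2) ?q < d" using d by (simp add: dist_real_def)
    then have "dist (F (?q - d/2)) (F ?q) < F ?q - u" by (rule d(2))
    then have "F (?q - d/2) > u" by (simp add: dist_real_def abs_if split: if_splits)
    then have "?q \<le> ?q - d/2" using Qf_le[OF rho_meas u(1)] by blast
    with d show False by simp
  qed
  show "u \<le> F ?q"
  proof (rule ccontr)
    assume "\<not> u \<le> F ?q"
    then have e: "u - F ?q > 0" by simp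
    obtain d where d: "d > 0" "\<And>x'. dist x' ?q < d \<Longrightarrow> dist (F x') (F ?q) < u - F ?q"
      using F_isCont[of ?q] e unfolding continuous_at_eps_delta by blast
    have "Inf {t. F t > u} < ?q + d" using d by (simp add: Qf_def)
    then obtain s where s: "F s > u" "s < ?q + d"
      using cInf_lessD[OF Qf_set_ne[OF rho_meas u(2)]] by blast
    have "?q \<le> s" using Qf_le[OF rho_meas u(1) s(1)] .
    then have "dist s ?q < d" using s d by (simp add: dist_real_def)
    then have "dist (F s) (F ?q) < u - F ?q" by (rule d(2))
    then have "F s < u" by (simp add: dist_real_def abs_if split: if_splits)
    with s show False by simp
  qed
qed

lemma le_Q_iff:
  assumes u: "0 < u" "u < 1"
  shows "y \<le> Q u \<longleftrightarrow> F y \<le> u"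
proof
  assume "y \<le> Q u"
  then have "F y \<le> F (Q u)" by (rule cdfX_mono[OF rho_meas])
  then show "F y \<le> u" using F_Q[OF u] by simp
next
  assume "F y \<le> u"
  then show "y \<le> Q u" using le_Qf[OF rho_meas u(2)] by blast
qed

lemma F_0: "F 0 = 0"
proof -
  have "prob {\<omega>\<in>space M. \<rho> \<omega> \<le> 0} = 0"
    using rho_pos by (intro prob_eq_0_AE) auto
  then show ?thesis by (simp add: cdfX_def)
qed

lemma Q_pos:
  assumes u: "0 < u" "u < 1"
  shows "Q u > 0"
proof (rule ccontr)
  assume "\<not> Q u > 0"
  then have "F (Q u) \<le> F 0" by (intro cdfX_mono[OF rho_meas]) simp
  then show False using F_Q[OF u] F_0 u by simp
qed

lemma Q_mono: "0 < u \<Longrightarrow> u \<le> v \<Longrightarrow> v < 1 \<Longrightarrow> Q u \<le> Q v"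
  by (rule Qf_mono[OF rho_meas])

lemma Q_le_Q_iff:
  assumes "0 < u" "u < 1" "0 < v" "v < 1"
  shows "Q u \<le> Q v \<longleftrightarrow> u \<le> v"
  using le_Q_iff[of v "Q u"] F_Q[of u] assms by simp

lemma Q_meas[measurable]: "Q \<in> borel_measurable (restrict_space lborel {0<..<1})"
proof -
  have "Q \<in> borel_measurable (restrict_space borel {0<..<1})"
    by (rule borel_measurable_mono_on_fnc[OF Qf_mono_on[OF rho_meas]])
  moreover have "restrict_space lborel {0<..<1::real} \<rightarrow>\<^sub>M borel = restrict_space borel {0<..<1} \<rightarrow>\<^sub>M borel"
    by (rule measurable_cong_sets) (simp_all add: sets_restrict_space)
  ultimately show ?thesis by simp
qed

lemma distr_Q: "distr (restrict_space lborel {0<..<1}) borel Q = distr M borel \<rho>"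
proof (rule cdf_unique)
  let ?\<Omega> = "restrict_space lborel {0<..<1}::real measure"
  interpret \<Omega>: prob_space ?\<Omega>
    by (auto simp add: emeasure_restrict_space space_restrict_space intro!: prob_spaceI)
  show "real_distribution (distr ?\<Omega> borel Q)"
    by (rule \<Omega>.real_distribution_distr) simp
  show "real_distribution (distr M borel \<rho>)"
    by (rule real_distribution_distr) simp
  show "cdf (distr ?\<Omega> borel Q) = cdf (distr M borel \<rho>)"
  proof
    fix y
    let ?A = "{u\<in>{0<..<1}. Q u \<le> y}"
    have A_eq: "Q -` {..y} \<inter> space ?\<Omega> = ?A" by (auto simp: space_restrict_space)
    have "Q -` {..y} \<inter> space ?\<Omega> \<in> sets ?\<Omega>" by (rule measurable_sets[OF Q_meas]) simp
    then have "Q -` {..y} \<inter> {0<..<1} \<in> sets borel"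
      by (subst (asm) sets_restrict_space_iff) (auto simp: space_restrict_space)
    moreover have "Q -` {..y} \<inter> {0<..<1} = ?A" by auto
    ultimately have A_sets: "?A \<in> sets lborel" by simp
    have F01: "0 \<le> F y" "F y \<le> 1" using cdfX_bounds[OF rho_meas] by auto
    have sub1: "{0<..<F y} \<subseteq> ?A"
    proof
      fix u assume u: "u \<in> {0<..<F y}"
      then have "0 < u" "u < 1" using F01 by auto
      moreover have "Q u \<le> y" using Qf_le[OF rho_meas \<open>0<u\<close>, of y] u by simp
      ultimately show "u \<in> ?A" by simp
    qed
    have sub2: "?A \<subseteq> {0<..F y}"
    proof
      fix u assume u: "u \<in> ?A"
      then have "F (Q u) \<le> F y" by (intro cdfX_mono[OF rho_meas]) auto
      then show "u \<in> {0<..F y}" using u F_Q[of u] by auto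
    qed
    have "emeasure lborel {0<..<F y} \<le> emeasure lborel ?A"
      using sub1 A_sets by (rule emeasure_mono)
    moreover have "emeasure lborel ?A \<le> emeasure lborel {0<..F y}"
      using sub2 by (rule emeasure_mono) simp
    ultimately have "emeasure lborel ?A = ennreal (F y)"
      using F01 by (intro antisym) auto
    then have "measure lborel ?A = F y" using F01 by (simp add: measure_def)
    have "cdf (distr ?\<Omega> borel Q) y = measure ?\<Omega> (Q -` {..y} \<inter> space ?\<Omega>)"
      by (simp add: cdf_def measure_distr)
    also have "\<dots> = measure lborel ?A" unfolding A_eq
      by (rule measure_restrict_space) auto
    also have "\<dots> = cdf (distr M borel \<rho>) y"
      using \<open>measure lborel ?A = F y\<close> cdfX_eq_cdf[OF rho_meas] by simp
    finally show "cdf (distr ?\<Omega> borel Q) y = cdf (distr M borel \<rho>) y" .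
  qed
qed


lemma qt:
  assumes g[measurable]: "g \<in> borel_measurable borel"
  shows "(\<integral>\<^sup>+\<omega>. g (\<rho> \<omega>) \<partial>M) = (\<integral>\<^sup>+u. g (Q u) * indicator {0<..<1} u \<partial>lborel)"
proof -
  let ?\<Omega> = "restrict_space lborel {0<..<1}::real measure"
  have "(\<integral>\<^sup>+\<omega>. g (\<rho> \<omega>) \<partial>M) = integral\<^sup>N (distr M borel \<rho>) g"
    by (simp add: nn_integral_distr)
  also have "\<dots> = integral\<^sup>N (distr ?\<Omega> borel Q) g" by (simp add: distr_Q)
  also have "\<dots> = (\<integral>\<^sup>+u. g (Q u) \<partial>?\<Omega>)" by (simp add: nn_integral_distr)
  also have "\<dots> = (\<integral>\<^sup>+u. g (Q u) * indicator {0<..<1} u \<partial>lborel)"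
    by (rule nn_integral_restrict_space) simp
  finally show ?thesis .
qed

definition eB :: "real \<Rightarrow> real" where
  "eB \<beta> = (\<integral>\<omega>. \<rho> \<omega> * indicator {\<omega>'\<in>space M. \<rho> \<omega>' \<le> \<beta>} \<omega> \<partial>M)"

lemma integrable_rho_ind: "integrable M (\<lambda>\<omega>. \<rho> \<omega> * indicator {\<omega>'\<in>space M. \<rho> \<omega>' \<le> \<beta>} \<omega>)"
proof -
  have "integrable M (\<lambda>x. indicator {\<omega>'\<in>space M. \<rho> \<omega>' \<le> \<beta>} x *\<^sub>R \<rho> x)"
    by (rule integrable_mult_indicator[OF _ rho_int]) measurable
  then show ?thesis by (simp add: mult.commute)
qed

lemma rho_ind_nonneg: "AE \<omega> in M. 0 \<le> \<rho> \<omega> * indicator A \<omega>"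
  using rho_pos by eventually_elim auto

lemma eB_nonneg: "0 \<le> eB \<beta>"
  unfolding eB_def by (rule integral_nonneg_AE[OF rho_ind_nonneg])

lemma eB_nn: "ennreal (eB \<beta>) = (\<integral>\<^sup>+\<omega>. ennreal (\<rho> \<omega> * indicator {\<omega>'\<in>space M. \<rho> \<omega>' \<le> \<beta>} \<omega>) \<partial>M)"
  unfolding eB_def by (rule nn_integral_eq_integral[symmetric, OF integrable_rho_ind rho_ind_nonneg])

lemma prob_B: "prob {\<omega>\<in>space M. \<rho> \<omega> \<le> t} = F t"
  by (simp add: cdfX_def)

lemma eB_pos:
  assumes "0 < p" "p < 1"
  shows "eB (Q p) > 0"
proof (rule ccontr)
  let ?B = "{\<omega>'\<in>space M. \<rho> \<omega>' \<le> Q p}"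
  assume "\<not> eB (Q p) > 0"
  then have "eB (Q p) = 0" using eB_nonneg[of "Q p"] by simp
  then have "AE \<omega> in M. \<rho> \<omega> * indicator ?B \<omega> = 0"
    unfolding eB_def using integral_nonneg_eq_0_iff_AE[OF integrable_rho_ind rho_ind_nonneg] by simp
  then have "AE \<omega> in M. \<omega> \<notin> ?B"
    using rho_pos by eventually_elim (auto split: split_indicator)
  then have "prob ?B = 0" by (subst prob_eq_0) auto
  then show False using prob_B[of "Q p"] F_Q[OF assms] assms by simp
qed

lemma D_eq:
  assumes c: "0 < c" "c < 1"
  shows "(LBINT z=c..1. real_of_ereal (quantile M \<rho> (1 - z))) = eB (Q (1 - c))"
proof -
  have qm[measurable]: "quantile M \<rho> \<in> borel_measurable borel" by (rule quantile_measurable) simp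
  define f where "f z = real_of_ereal (quantile M \<rho> (1 - z))" for z
  have fm[measurable]: "f \<in> borel_measurable borel" unfolding f_def by measurable
  define p where "p = 1 - c"
  have p: "0 < p" "p < 1" using c by (auto simp: p_def)
  define \<beta> where "\<beta> = Q p"
  have f_in: "f z = Q (1 - z)" if "c < z" "z < 1" for z
    unfolding f_def using that c by (subst quantile_in01) auto
  have "(LBINT z=c..1. real_of_ereal (quantile M \<rho> (1 - z))) = (\<integral>z. indicator {c<..<1} z * f z \<partial>lborel)"
  proof -
    have "einterval (ereal c) 1 = {c<..<1}" by (auto simp: einterval_def)
    then show ?thesis
      by (simp add: interval_lebesgue_integral_def set_lebesgue_integral_def f_def c(2) less_imp_le)
  qed
  also have "\<dots> = enn2real (\<integral>\<^sup>+z. ennreal (indicator {c<..<1} z * f z) \<partial>lborel)"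
  proof (rule integral_eq_nn_integral)
    show "(\<lambda>z. indicator {c<..<1} z * f z) \<in> borel_measurable lborel" by measurable
    show "AE x in lborel. 0 \<le> indicator {c<..<1} x * f x"
    proof (intro AE_I2)
      fix x show "0 \<le> indicator {c<..<1} x * f x"
        using f_in[of x] Q_pos[of "1 - x"] c by (auto split: split_indicator)
    qed
  qed
  also have "(\<integral>\<^sup>+z. ennreal (indicator {c<..<1} z * f z) \<partial>lborel)
      = (\<integral>\<^sup>+u. ennreal (indicator {c<..<1} (1 + (-1) * u) * f (1 + (-1) * u)) \<partial>lborel)"
    by (subst nn_integral_real_affine[where c="-1" and t=1]) auto
  also have "\<dots> = (\<integral>\<^sup>+u. ennreal (Q u * indicator {..\<beta>} (Q u)) * indicator {0<..<1} u \<partial>lborel)"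
  proof (rule nn_integral_cong_AE)
    show "AE u in lborel. ennreal (indicator {c<..<1} (1 + (-1) * u) * f (1 + (-1) * u))
       = ennreal (Q u * indicator {..\<beta>} (Q u)) * indicator {0<..<1} u"
      using AE_lborel_singleton[of p]
    proof eventually_elim
      case (elim u)
      show ?case
      proof (cases "0 < u \<and> u < 1")
        case True
        show ?thesis
        proof (cases "u < p")
          case True
          then have "1 + (-1) * u \<in> {c<..<1}" "Q u \<le> \<beta>"
            using \<open>0 < u \<and> u < 1\<close> p by (auto simp: p_def \<beta>_def intro!: Q_mono)
          then show ?thesis using f_in[of "1 - u"] \<open>0 < u \<and> u < 1\<close> by simp
        next
          case False
          then have "u > p" using elim by simp
          then have "1 + (-1) * u \<notin> {c<..<1}" "\<not> Q u \<le> \<beta>"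
            using \<open>0 < u \<and> u < 1\<close> p Q_le_Q_iff[of u p] by (auto simp: p_def \<beta>_def)
          then show ?thesis by simp
        qed
      next
        case False
        then have "1 + (-1) * u \<notin> {c<..<1}" using p by (auto simp: p_def)
        then show ?thesis using False by simp
      qed
    qed
  qed
  also have "\<dots> = (\<integral>\<^sup>+\<omega>. ennreal (\<rho> \<omega> * indicator {..\<beta>} (\<rho> \<omega>)) \<partial>M)"
    by (rule qt[symmetric]) measurable
  also have "\<dots> = (\<integral>\<^sup>+\<omega>. ennreal (\<rho> \<omega> * indicator {\<omega>'\<in>space M. \<rho> \<omega>' \<le> \<beta>} \<omega>) \<partial>M)"
    by (rule nn_integral_cong) (auto split: split_indicator)
  also have "\<dots> = ennreal (eB \<beta>)" by (rule eB_nn[symmetric])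
  finally show ?thesis using eB_nonneg[of \<beta>] by (simp add: \<beta>_def p_def)
qed

end

lemma emeasure_lborel_Ici0: "emeasure lborel {0::real..} = \<infinity>"
proof (rule ccontr)
  assume "emeasure lborel {0::real..} \<noteq> \<infinity>"
  then obtain r where r: "emeasure lborel {0::real..} = ennreal r" "0 \<le> r"
    using ennreal_cases[of "emeasure lborel {0::real..}"] by auto
  have "emeasure lborel {0::real..<r+1} \<le> emeasure lborel {0::real..}"
    by (rule emeasure_mono) auto
  then show False using r by simp
qed

lemma emeasure_level: "emeasure lborel {t::real. 0 \<le> t \<and> ennreal t < y} = y"
proof (cases "y = \<infinity>")
  case True
  then have "{t::real. 0 \<le> t \<and> ennreal t < y} = {0..}" by auto
  then show ?thesis using True emeasure_lborel_Ici0 by simp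
next
  case False
  then obtain r where r: "y = ennreal r" "0 \<le> r" using ennreal_cases[of y] by auto
  then have "{t::real. 0 \<le> t \<and> ennreal t < y} = {0..<r}" by (auto simp: ennreal_less_iff)
  then show ?thesis using r by simp
qed

lemma layer_cake:
  fixes f w :: "'a \<Rightarrow> ennreal"
  assumes N: "sigma_finite_measure N" and [measurable]: "f \<in> borel_measurable N" "w \<in> borel_measurable N"
  shows "(\<integral>\<^sup>+\<omega>. w \<omega> * f \<omega> \<partial>N) =
         (\<integral>\<^sup>+t. (\<integral>\<^sup>+\<omega>. (if 0 \<le> t \<and> ennreal t < f \<omega> then w \<omega> else 0) \<partial>N) \<partial>lborel)"
proof -
  interpret P: pair_sigma_finite N lborel
    unfolding pair_sigma_finite_def using N by (simp add: lborel.sigma_finite_measure_axioms)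
  have pt: "w \<omega> * f \<omega> = (\<integral>\<^sup>+t. (if 0 \<le> t \<and> ennreal t < f \<omega> then w \<omega> else 0) \<partial>lborel)" for \<omega>
  proof -
    have "(\<integral>\<^sup>+t. (if 0 \<le> t \<and> ennreal t < f \<omega> then w \<omega> else 0) \<partial>lborel)
        = (\<integral>\<^sup>+t. w \<omega> * indicator {t::real. 0 \<le> t \<and> ennreal t < f \<omega>} t \<partial>lborel)"
      by (rule nn_integral_cong) (auto split: split_indicator)
    also have "\<dots> = w \<omega> * emeasure lborel {t::real. 0 \<le> t \<and> ennreal t < f \<omega>}"
      by (subst nn_integral_cmult_indicator) auto
    also have "\<dots> = w \<omega> * f \<omega>" by (simp add: emeasure_level)
    finally show ?thesis ..
  qed
  have "(\<integral>\<^sup>+\<omega>. w \<omega> * f \<omega> \<partial>N) =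
      (\<integral>\<^sup>+\<omega>. (\<integral>\<^sup>+t. (if 0 \<le> t \<and> ennreal t < f \<omega> then w \<omega> else 0) \<partial>lborel) \<partial>N)"
    by (simp add: pt[symmetric])
  also have "\<dots> = (\<integral>\<^sup>+t. (\<integral>\<^sup>+\<omega>. (if 0 \<le> t \<and> ennreal t < f \<omega> then w \<omega> else 0) \<partial>N) \<partial>lborel)"
    by (rule P.Fubini'[symmetric]) measurable
  finally show ?thesis .
qed

context prob_space
begin

lemma Qf_step:
  assumes X: "X \<in> borel_measurable M" and c: "0 \<le> c" "c < 1" and k: "k > 0"
    and cdf: "\<And>t. cdfX M X t = (if t < 0 then 0 else if t < k then c else 1)"
    and u: "0 < u" "u < 1"
  shows "Qf M X u = (if u < c then 0 else k)"
proof (cases "u < c")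
  case True
  have "Qf M X u \<le> 0" using Qf_le[OF X u(1), of 0] cdf[of 0] True k by simp
  moreover have "0 \<le> Qf M X u"
  proof (rule dense_le)
    fix t :: real assume "t < 0"
    then show "t \<le> Qf M X u" using le_Qf[OF X u(2), of t] cdf[of t] u by simp
  qed
  ultimately show ?thesis using True by simp
next
  case False
  have "Qf M X u \<le> k" using Qf_le[OF X u(1), of k] cdf[of k] u k by simp
  moreover have "k \<le> Qf M X u"
  proof (rule dense_le)
    fix t :: real assume "t < k"
    then have "cdfX M X t \<le> u" using cdf[of t] False u by auto
    then show "t \<le> Qf M X u" using le_Qf[OF X u(2), of t] by simp
  qed
  ultimately show ?thesis using False by simp
qed

lemma quantile_step:
  assumes X: "X \<in> borel_measurable M" and c: "0 \<le> c" "c < 1" and k: "k > 0"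
    and cdf: "\<And>t. cdfX M X t = (if t < 0 then 0 else if t < k then c else 1)"
    and z: "0 \<le> z" "z \<le> 1"
  shows "quantile M X z = (if z < c then 0 else ereal k)"
proof -
  note Q = Qf_step[OF X c k cdf]
  consider "0 < z \<and> z < 1" | "z = 0" | "z = 1" using z by force
  then show ?thesis
  proof cases
    case 1
    then show ?thesis using Q[of z] by (simp add: quantile_in01)
  next
    case 2
    show ?thesis
    proof (cases "c > 0")
      case True
      have "(INF u\<in>{0<..<1}. ereal (Qf M X u)) = 0"
      proof (rule antisym)
        have "c/2 \<in> {0<..<1}" using True c by auto
        then have "(INF u\<in>{0<..<1}. ereal (Qf M X u)) \<le> ereal (Qf M X (c/2))" by (rule INF_lower)
        also have "\<dots> = 0" using Q[of "c/2"] True c by simp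
        finally show "(INF u\<in>{0<..<1}. ereal (Qf M X u)) \<le> 0" .
        show "0 \<le> (INF u\<in>{0<..<1}. ereal (Qf M X u))"
          by (rule INF_greatest) (use Q k in auto)
      qed
      then show ?thesis using 2 True by (simp add: quantile_0)
    next
      case False
      then have "c = 0" using c by simp
      have "(INF u\<in>{0<..<1}. ereal (Qf M X u)) = (INF u\<in>{0<..<1::real}. ereal k)"
        by (rule INF_cong) (use Q \<open>c = 0\<close> in auto)
      also have "\<dots> = ereal k" by (simp add: INF_constant)
      finally show ?thesis using 2 \<open>c = 0\<close> by (simp add: quantile_0)
    qed
  next
    case 3
    have "(SUP u\<in>{0<..<1}. ereal (Qf M X u)) = ereal k"
    proof (rule antisym)
      show "(SUP u\<in>{0<..<1}. ereal (Qf M X u)) \<le> ereal k"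
        by (rule SUP_least) (use Q k in auto)
      have "(1 + c)/2 \<in> {0<..<1}" using c by auto
      then have "ereal (Qf M X ((1 + c)/2)) \<le> (SUP u\<in>{0<..<1}. ereal (Qf M X u))" by (rule SUP_upper)
      moreover have "Qf M X ((1 + c)/2) = k" using Q[of "(1+c)/2"] c by simp
      ultimately show "ereal k \<le> (SUP u\<in>{0<..<1}. ereal (Qf M X u))" by simp
    qed
    then show ?thesis using 3 c by (simp add: quantile_1)
  qed
qed

lemma Vobj_step:
  assumes X: "X \<in> borel_measurable M" and c: "0 \<le> c" "c < 1" and k: "k > 0"
    and cdf: "\<And>t. cdfX M X t = (if t < 0 then 0 else if t < k then c else 1)"
    and m: "sets m = sets borel"
  shows "Vobj m M X = ennreal k * emeasure m {c..1}"
proof -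
  have "Vobj m M X = (\<integral>\<^sup>+z. ennreal k * indicator {c..1} z \<partial>m)"
    unfolding Vobj_def
  proof (rule nn_integral_cong)
    fix z show "e2ennreal (quantile M X z) * indicator {0..1} z = ennreal k * indicator {c..1} z"
      using quantile_step[OF X c k cdf, of z] c by (auto split: split_indicator)
  qed
  also have "\<dots> = ennreal k * emeasure m {c..1}"
    by (rule nn_integral_cmult_indicator) (simp add: m)
  finally show ?thesis .
qed

end

context setting
begin

lemma HL:
  assumes A: "A \<in> sets M" and pA: "prob A = F \<beta>"
  shows "eB \<beta> \<le> (\<integral>\<omega>. \<rho> \<omega> * indicator A \<omega> \<partial>M)"
proof -
  let ?B = "{\<omega>'\<in>space M. \<rho> \<omega>' \<le> \<beta>}"
  have Bs: "?B \<in> sets M" by measurable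
  have intA: "integrable M (\<lambda>\<omega>. \<rho> \<omega> * indicator A \<omega>)"
    using integrable_mult_indicator[OF A rho_int] by (simp add: mult.commute)
  have intB: "integrable M (\<lambda>\<omega>. \<rho> \<omega> * indicator ?B \<omega>)" by (rule integrable_rho_ind)
  have "(\<integral>\<omega>. \<rho> \<omega> * indicator ?B \<omega> + \<beta> * indicator A \<omega> \<partial>M)
      \<le> (\<integral>\<omega>. \<rho> \<omega> * indicator A \<omega> + \<beta> * indicator ?B \<omega> \<partial>M)"
  proof (rule integral_mono)
    show "integrable M (\<lambda>\<omega>. \<rho> \<omega> * indicator ?B \<omega> + \<beta> * indicator A \<omega>)"
      using intB A by (intro Bochner_Integration.integrable_add) (auto intro!: integrable_real_indicator simp: less_top[symmetric])
    show "integrable M (\<lambda>\<omega>. \<rho> \<omega> * indicator A \<omega> + \<beta> * indicator ?B \<omega>)"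
      using intA Bs by (intro Bochner_Integration.integrable_add) (auto intro!: integrable_real_indicator simp: less_top[symmetric])
    fix \<omega> assume "\<omega> \<in> space M"
    then show "\<rho> \<omega> * indicator ?B \<omega> + \<beta> * indicator A \<omega> \<le> \<rho> \<omega> * indicator A \<omega> + \<beta> * indicator ?B \<omega>"
      by (auto split: split_indicator)
  qed
  moreover have "(\<integral>\<omega>. \<rho> \<omega> * indicator ?B \<omega> + \<beta> * indicator A \<omega> \<partial>M) = eB \<beta> + \<beta> * prob A"
    using intB A by (subst Bochner_Integration.integral_add) (auto simp: eB_def less_top[symmetric] intro!: integrable_real_indicator)
  moreover have "(\<integral>\<omega>. \<rho> \<omega> * indicator A \<omega> + \<beta> * indicator ?B \<omega> \<partial>M)
      = (\<integral>\<omega>. \<rho> \<omega> * indicator A \<omega> \<partial>M) + \<beta> * prob ?B"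
    using intA Bs by (subst Bochner_Integration.integral_add) (auto intro!: integrable_real_indicator simp: less_top[symmetric])
  ultimately show ?thesis using pA prob_B[of \<beta>] by simp
qed

lemma digital_eq: "digital M \<rho> x \<beta> = (\<lambda>\<omega>. (x / eB \<beta>) * indicator {\<omega>'\<in>space M. \<rho> \<omega>' \<le> \<beta>} \<omega>)"
  by (simp add: digital_def eB_def)

lemma digital_feasible:
  assumes x: "x > 0" and p: "0 < p" "p < 1"
  shows "feasible M \<rho> x (digital M \<rho> x (Q p))"
proof -
  let ?B = "{\<omega>'\<in>space M. \<rho> \<omega>' \<le> Q p}"
  have e: "eB (Q p) > 0" by (rule eB_pos[OF p])
  have "(\<integral>\<^sup>+\<omega>. ennreal (\<rho> \<omega> * (x / eB (Q p) * indicator ?B \<omega>)) \<partial>M)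
      = (\<integral>\<^sup>+\<omega>. ennreal (x / eB (Q p)) * ennreal (\<rho> \<omega> * indicator ?B \<omega>) \<partial>M)"
  proof (rule nn_integral_cong_AE)
    show "AE \<omega> in M. ennreal (\<rho> \<omega> * (x / eB (Q p) * indicator ?B \<omega>)) =
        ennreal (x / eB (Q p)) * ennreal (\<rho> \<omega> * indicator ?B \<omega>)"
      using rho_pos
    proof eventually_elim
      case (elim \<omega>)
      then show ?case using e x by (auto simp: ennreal_mult[symmetric] ac_simps)
    qed
  qed
  also have "\<dots> = ennreal (x / eB (Q p)) * ennreal (eB (Q p))"
    by (subst nn_integral_cmult) (auto simp: eB_nn)
  also have "\<dots> = ennreal x" using e x by (simp add: ennreal_mult[symmetric])
  finally show ?thesis
    unfolding feasible_def digital_eq using e x by (auto intro!: AE_I2)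
qed

lemma cdf_digital:
  assumes x: "x > 0" and p: "0 < p" "p < 1"
  shows "cdfX M (digital M \<rho> x (Q p)) t = (if t < 0 then 0 else if t < x / eB (Q p) then 1 - p else 1)"
proof -
  let ?B = "{\<omega>'\<in>space M. \<rho> \<omega>' \<le> Q p}"
  let ?k = "x / eB (Q p)"
  have k: "?k > 0" using eB_pos[OF p] x by simp
  have pB: "prob ?B = p" using prob_B F_Q[OF p] by simp
  have Bs: "?B \<in> sets M" by measurable
  have cd: "cdfX M (digital M \<rho> x (Q p)) t = prob {\<omega>\<in>space M. ?k * indicator ?B \<omega> \<le> t}"
    unfolding cdfX_def digital_eq ..
  consider "t < 0" | "0 \<le> t" "t < ?k" | "?k \<le> t" by linarith
  then show ?thesis
  proof cases
    case 1
    then have S: "{\<omega>\<in>space M. ?k * indicator ?B \<omega> \<le> t} = {}" using k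
      by (auto split: split_indicator)
    show ?thesis unfolding cd S using 1 by simp
  next
    case 2
    then have S: "{\<omega>\<in>space M. ?k * indicator ?B \<omega> \<le> t} = space M - ?B" using k
      by (auto split: split_indicator)
    show ?thesis unfolding cd S using 2 pB prob_compl[OF Bs] by simp
  next
    case 3
    then have S: "{\<omega>\<in>space M. ?k * indicator ?B \<omega> \<le> t} = space M" using k
      by (auto split: split_indicator)
    show ?thesis unfolding cd S using 3 k by (simp add: prob_space)
  qed
qed

lemma Vobj_digital:
  assumes x: "x > 0" and p: "0 < p" "p < 1" and m: "sets m = sets borel"
  shows "Vobj m M (digital M \<rho> x (Q p)) = ennreal (x / eB (Q p)) * emeasure m {1 - p..1}"
proof (rule Vobj_step[OF _ _ _ _ cdf_digital[OF x p] m])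
  show "digital M \<rho> x (Q p) \<in> borel_measurable M" unfolding digital_eq by measurable
  show "x / eB (Q p) > 0" using eB_pos[OF p] x by simp
qed (use p in auto)

lemma rho_nonneg: "AE \<omega> in M. 0 \<le> \<rho> \<omega>"
  using rho_pos by eventually_elim auto

lemma delta_pos: "(\<integral>\<omega>. \<rho> \<omega> \<partial>M) > 0"
proof -
  have "(\<integral>\<omega>. \<rho> \<omega> \<partial>M) \<ge> 0" by (rule integral_nonneg_AE[OF rho_nonneg])
  moreover have "(\<integral>\<omega>. \<rho> \<omega> \<partial>M) \<noteq> 0"
  proof
    assume "(\<integral>\<omega>. \<rho> \<omega> \<partial>M) = 0"
    then have "AE \<omega> in M. \<rho> \<omega> = 0" using integral_nonneg_eq_0_iff_AE[OF rho_int rho_nonneg] by simp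
    with rho_pos have "AE \<omega> in M. False" by eventually_elim auto
    then show False by simp
  qed
  ultimately show ?thesis by simp
qed

lemma const_feasible:
  assumes x: "x > 0"
  shows "feasible M \<rho> x (\<lambda>_. x / (\<integral>\<omega>. \<rho> \<omega> \<partial>M))"
proof -
  let ?d = "\<integral>\<omega>. \<rho> \<omega> \<partial>M"
  have d: "?d > 0" by (rule delta_pos)
  have "(\<integral>\<^sup>+\<omega>. ennreal (\<rho> \<omega> * (x / ?d)) \<partial>M) = (\<integral>\<^sup>+\<omega>. ennreal (x / ?d) * ennreal (\<rho> \<omega>) \<partial>M)"
  proof (rule nn_integral_cong_AE)
    show "AE \<omega> in M. ennreal (\<rho> \<omega> * (x / ?d)) = ennreal (x / ?d) * ennreal (\<rho> \<omega>)"
      using rho_pos by eventually_elim (use d x in \<open>auto simp: ennreal_mult[symmetric] ac_simps\<close>)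
  qed
  also have "\<dots> = ennreal (x / ?d) * ennreal ?d"
    using nn_integral_eq_integral[OF rho_int rho_nonneg]
    by (subst nn_integral_cmult) auto
  also have "\<dots> = ennreal x" using d x by (simp add: ennreal_mult[symmetric])
  finally show ?thesis unfolding feasible_def using d x by (auto intro!: AE_I2)
qed

end

locale setting2 = setting M \<rho> for M :: "'a measure" and \<rho> +
  fixes m :: "real measure"
  assumes m_prob: "prob_space m" and m_sets: "sets m = sets borel" and m01: "measure m {0..1} = 1"
begin

interpretation mP: prob_space m by (rule m_prob)

abbreviation "\<delta> \<equiv> (\<integral>\<omega>. \<rho> \<omega> \<partial>M)"
abbreviation "\<gamma> \<equiv> gammastar m M \<rho>"

lemma em01: "emeasure m {0..1} = 1"
  using m01 mP.emeasure_eq_measure by simp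

lemma em_ennreal: "emeasure m A = ennreal (measure m A)"
  by (rule mP.emeasure_eq_measure)

lemma zeta_eq:
  assumes "0 < c" "c < 1"
  shows "zeta m M \<rho> c = measure m {c..1} / eB (Q (1 - c))"
  unfolding zeta_def using D_eq[OF assms] by simp

lemma zeta_nonneg: "0 < c \<Longrightarrow> c < 1 \<Longrightarrow> 0 \<le> zeta m M \<rho> c"
  using zeta_eq[of c] eB_nonneg by simp

lemma measure_eq_zeta:
  assumes "0 < c" "c < 1"
  shows "measure m {c..1} = zeta m M \<rho> c * eB (Q (1 - c))"
  using zeta_eq[OF assms] eB_pos[of "1 - c"] assms by simp

lemma zeta_le_gamma: "0 < c \<Longrightarrow> c < 1 \<Longrightarrow> ereal (zeta m M \<rho> c) \<le> \<gamma>"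
  unfolding gammastar_def by (rule SUP_upper) simp

definition LS :: "('a \<Rightarrow> real) \<Rightarrow> real \<Rightarrow> ennreal" where
  "LS X t = (\<integral>\<^sup>+z. (if 0 \<le> t \<and> ennreal t < e2ennreal (quantile M X z) then indicator {0..1} z else 0) \<partial>m)"

definition RS :: "('a \<Rightarrow> real) \<Rightarrow> real \<Rightarrow> ennreal" where
  "RS X t = (\<integral>\<^sup>+\<omega>. (if 0 \<le> t \<and> ennreal t < ennreal (X \<omega>) then ennreal (\<rho> \<omega>) else 0) \<partial>M)"

lemma ennreal_less_e2ennreal:
  assumes "0 \<le> t" "ennreal t < e2ennreal y"
  shows "ereal t < y"
proof (cases y)
  case (real r)
  then show ?thesis using assms by (auto simp: e2ennreal_ereal ennreal_less_iff)
next
  case PInf then show ?thesis by simp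
next
  case MInf then show ?thesis using assms by (simp add: e2ennreal_neg)
qed

lemma LS_support:
  assumes X: "X \<in> borel_measurable M" and t: "0 \<le> t" and z: "0 \<le> z" "z \<le> 1"
    and lt: "ennreal t < e2ennreal (quantile M X z)"
  shows "cdfX M X t \<le> z \<and> cdfX M X t < 1"
proof -
  have lt': "ereal t < quantile M X z" by (rule ennreal_less_e2ennreal[OF t lt])
  consider "0 < z \<and> z < 1" | "z = 0" | "z = 1" using z by force
  then show ?thesis
  proof cases
    case 1
    then have "t < Qf M X z" using lt' by (simp add: quantile_in01)
    then show ?thesis using Qf_less_imp[OF X, of z t] 1 by simp
  next
    case 2
    then have "ereal t < (INF u\<in>{0<..<1}. ereal (Qf M X u))" using lt' by (simp add: quantile_0)
    then have all: "\<forall>u\<in>{0<..<1}. t < Qf M X u" by (auto dest: less_INF_D)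
    have "cdfX M X t \<le> 0"
    proof (rule ccontr)
      assume "\<not> cdfX M X t \<le> 0"
      then have pos: "cdfX M X t > 0" by simp
      define u where "u = min (cdfX M X t / 2) (1/2)"
      have u: "0 < u" "u < 1" "u < cdfX M X t" using pos by (auto simp: u_def)
      then have "t < Qf M X u" using all by auto
      then have "cdfX M X t \<le> u" using Qf_less_imp[OF X u(1)] by simp
      then show False using u by simp
    qed
    then show ?thesis using 2 by simp
  next
    case 3
    then obtain u where u: "u \<in> {0<..<1}" "ereal t < ereal (Qf M X u)"
      using lt' by (auto simp: quantile_1 less_SUP_iff)
    then have "cdfX M X t \<le> u" using Qf_less_imp[OF X, of u t] by simp
    then show ?thesis using 3 u by simp
  qed
qed

lemma LS_zero:
  assumes X: "X \<in> borel_measurable M" and "\<not> cdfX M X t < 1"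
  shows "LS X t = 0"
  unfolding LS_def
proof (rule nn_integral_zero', rule AE_I2)
  fix z show "(if 0 \<le> t \<and> ennreal t < e2ennreal (quantile M X z) then indicator {0..1} z else 0) = (0::ennreal)"
    using LS_support[OF X, of t z] assms by (auto split: split_indicator)
qed

lemma LS_le:
  assumes X: "X \<in> borel_measurable M" and t: "0 \<le> t"
  shows "LS X t \<le> emeasure m {cdfX M X t..1}"
proof -
  have "LS X t \<le> (\<integral>\<^sup>+z. indicator {cdfX M X t..1} z \<partial>m)"
    unfolding LS_def
    by (rule nn_integral_mono) (use LS_support[OF X t] in \<open>auto split: split_indicator\<close>)
  also have "\<dots> = emeasure m {cdfX M X t..1}" by (simp add: m_sets)
  finally show ?thesis .
qed

lemma RS_eq:
  assumes X: "X \<in> borel_measurable M" and t: "0 \<le> t"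
  shows "RS X t = ennreal (\<integral>\<omega>. \<rho> \<omega> * indicator {\<omega>\<in>space M. t < X \<omega>} \<omega> \<partial>M)"
proof -
  let ?A = "{\<omega>\<in>space M. t < X \<omega>}"
  have As: "?A \<in> sets M" using X by measurable
  have "RS X t = (\<integral>\<^sup>+\<omega>. ennreal (\<rho> \<omega> * indicator ?A \<omega>) \<partial>M)"
    unfolding RS_def
    by (rule nn_integral_cong) (use t in \<open>auto simp: ennreal_less_iff split: split_indicator\<close>)
  also have "\<dots> = ennreal (\<integral>\<omega>. \<rho> \<omega> * indicator ?A \<omega> \<partial>M)"
  proof (rule nn_integral_eq_integral)
    show "integrable M (\<lambda>\<omega>. \<rho> \<omega> * indicator ?A \<omega>)"
      using integrable_mult_indicator[OF As rho_int] by (simp add: mult.commute)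
    show "AE \<omega> in M. 0 \<le> \<rho> \<omega> * indicator ?A \<omega>" by (rule rho_ind_nonneg)
  qed
  finally show ?thesis .
qed

lemma prob_gt: "X \<in> borel_measurable M \<Longrightarrow> prob {\<omega>\<in>space M. t < X \<omega>} = 1 - cdfX M X t"
proof -
  assume X: "X \<in> borel_measurable M"
  have "{\<omega>\<in>space M. t < X \<omega>} = space M - {\<omega>\<in>space M. X \<omega> \<le> t}" by auto
  moreover have "{\<omega>\<in>space M. X \<omega> \<le> t} \<in> sets M" using X by measurable
  ultimately show ?thesis by (simp add: prob_compl cdfX_def)
qed


lemma gamma_real:
  assumes "\<gamma> \<noteq> \<infinity>"
  obtains g where "\<gamma> = ereal g" "0 \<le> g"
proof -
  have "ereal (zeta m M \<rho> (1/2)) \<le> \<gamma>" by (rule zeta_le_gamma) auto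
  moreover have "0 \<le> zeta m M \<rho> (1/2)" by (rule zeta_nonneg) auto
  ultimately have "0 \<le> \<gamma>" by (metis ereal_less_eq(5) order_trans zero_ereal_def)
  then show ?thesis using assms that by (cases \<gamma>) auto
qed

lemma int_full:
  assumes "prob A = 1" "A \<in> sets M"
  shows "(\<integral>\<omega>. \<rho> \<omega> * indicator A \<omega> \<partial>M) = \<delta>"
proof (rule integral_cong_AE)
  show "AE \<omega> in M. \<rho> \<omega> * indicator A \<omega> = \<rho> \<omega>"
    using AE_prob_1[OF assms(1)] by eventually_elim simp
qed (use assms in auto)

lemma pointwise:
  assumes g: "\<gamma> = ereal g" "0 \<le> g" and X: "X \<in> borel_measurable M" and t: "0 \<le> t"
  shows "LS X t \<le> ennreal (max (1/\<delta>) g) * RS X t"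
proof -
  let ?a = "cdfX M X t"
  let ?A = "{\<omega>\<in>space M. t < X \<omega>}"
  let ?I = "\<integral>\<omega>. \<rho> \<omega> * indicator ?A \<omega> \<partial>M"
  have As: "?A \<in> sets M" using X by measurable
  have pA: "prob ?A = 1 - ?a" by (rule prob_gt[OF X])
  have a0: "0 \<le> ?a" by (simp add: cdfX_def)
  have RS: "RS X t = ennreal ?I" by (rule RS_eq[OF X t])
  have I0: "0 \<le> ?I" by (rule integral_nonneg_AE[OF rho_ind_nonneg])
  have d: "\<delta> > 0" by (rule delta_pos)
  consider "\<not> ?a < 1" | "?a \<le> 0" | "0 < ?a" "?a < 1" by linarith
  then show ?thesis
  proof cases
    case 1 then show ?thesis using LS_zero[OF X] by simp
  next
    case 2
    then have "?a = 0" using a0 by simp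
    then have "?I = \<delta>" using int_full[OF _ As] pA by simp
    have "LS X t \<le> emeasure m {?a..1}" by (rule LS_le[OF X t])
    also have "\<dots> = ennreal (1/\<delta> * \<delta>)" using \<open>?a = 0\<close> em01 d by simp
    also have "\<dots> \<le> ennreal (max (1/\<delta>) g * \<delta>)" using d
      by (intro ennreal_leI mult_right_mono) auto
    also have "\<dots> = ennreal (max (1/\<delta>) g) * RS X t"
      using RS \<open>?I = \<delta>\<close> d g by (simp add: ennreal_mult[symmetric])
    finally show ?thesis .
  next
    case 3
    let ?e = "eB (Q (1 - ?a))"
    have e: "?e > 0" using eB_pos[of "1 - ?a"] 3 by simp
    have eI: "?e \<le> ?I" using HL[OF As] pA F_Q[of "1 - ?a"] 3 by simp
    have zg: "zeta m M \<rho> ?a \<le> g" using zeta_le_gamma[of ?a] 3 g by simp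
    have z0: "0 \<le> zeta m M \<rho> ?a" using zeta_nonneg[of ?a] 3 by simp
    have "LS X t \<le> emeasure m {?a..1}" by (rule LS_le[OF X t])
    also have "\<dots> = ennreal (zeta m M \<rho> ?a * ?e)" using measure_eq_zeta[of ?a] 3 em_ennreal by simp
    also have "\<dots> \<le> ennreal (max (1/\<delta>) g * ?I)"
    proof (rule ennreal_leI)
      have "zeta m M \<rho> ?a * ?e \<le> g * ?e" using zg e by (intro mult_right_mono) auto
      also have "\<dots> \<le> g * ?I" using eI g by (intro mult_left_mono) auto
      also have "\<dots> \<le> max (1/\<delta>) g * ?I" using I0 by (intro mult_right_mono) auto
      finally show "zeta m M \<rho> ?a * ?e \<le> max (1/\<delta>) g * ?I" .
    qed
    also have "\<dots> = ennreal (max (1/\<delta>) g) * RS X t"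
      using RS I0 g by (simp add: ennreal_mult)
    finally show ?thesis .
  qed
qed

lemma pointwise_strict:
  assumes g: "\<gamma> = ereal g" "0 \<le> g" and gt: "1/\<delta> < g"
    and na: "\<forall>c\<in>{0<..<1}. zeta m M \<rho> c \<noteq> g"
    and X: "X \<in> borel_measurable M" and t: "0 \<le> t" and a1: "cdfX M X t < 1"
  shows "LS X t < ennreal g * RS X t"
proof -
  let ?a = "cdfX M X t"
  let ?A = "{\<omega>\<in>space M. t < X \<omega>}"
  let ?I = "\<integral>\<omega>. \<rho> \<omega> * indicator ?A \<omega> \<partial>M"
  have As: "?A \<in> sets M" using X by measurable
  have pA: "prob ?A = 1 - ?a" by (rule prob_gt[OF X])
  have a0: "0 \<le> ?a" by (simp add: cdfX_def)
  have RS: "RS X t = ennreal ?I" by (rule RS_eq[OF X t])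
  have I0: "0 \<le> ?I" by (rule integral_nonneg_AE[OF rho_ind_nonneg])
  have d: "\<delta> > 0" by (rule delta_pos)
  consider "?a \<le> 0" | "0 < ?a" by linarith
  then show ?thesis
  proof cases
    case 1
    then have "?a = 0" using a0 by simp
    then have "?I = \<delta>" using int_full[OF _ As] pA by simp
    have "LS X t \<le> emeasure m {?a..1}" by (rule LS_le[OF X t])
    also have "\<dots> = ennreal (1/\<delta> * \<delta>)" using \<open>?a = 0\<close> em01 d by simp
    also have "\<dots> < ennreal (g * \<delta>)" using d gt
      by (subst ennreal_less_iff) (auto simp: divide_less_eq)
    also have "\<dots> = ennreal g * RS X t"
      using RS \<open>?I = \<delta>\<close> d g by (simp add: ennreal_mult)
    finally show ?thesis .
  next
    case 2
    let ?e = "eB (Q (1 - ?a))"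
    have e: "?e > 0" using eB_pos[of "1 - ?a"] 2 a1 by simp
    have eI: "?e \<le> ?I" using HL[OF As] pA F_Q[of "1 - ?a"] 2 a1 by simp
    have zg: "zeta m M \<rho> ?a < g" using zeta_le_gamma[of ?a] na 2 a1 g by force
    have z0: "0 \<le> zeta m M \<rho> ?a" using zeta_nonneg[of ?a] 2 a1 by simp
    have "LS X t \<le> emeasure m {?a..1}" by (rule LS_le[OF X t])
    also have "\<dots> = ennreal (zeta m M \<rho> ?a * ?e)" using measure_eq_zeta[of ?a] 2 a1 em_ennreal by simp
    also have "\<dots> < ennreal (g * ?I)"
    proof (subst ennreal_less_iff)
      show "0 \<le> zeta m M \<rho> ?a * ?e" using z0 e by simp
      have "zeta m M \<rho> ?a * ?e < g * ?e" using zg e by (intro mult_strict_right_mono) auto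
      also have "\<dots> \<le> g * ?I" using eI g by (intro mult_left_mono) auto
      finally show "zeta m M \<rho> ?a * ?e < g * ?I" .
    qed
    also have "\<dots> = ennreal g * RS X t"
      using RS I0 g by (simp add: ennreal_mult)
    finally show ?thesis .
  qed
qed

end

context setting2
begin

interpretation mP: prob_space m by (rule m_prob)

lemma Vobj_layer:
  assumes X: "X \<in> borel_measurable M"
  shows "Vobj m M X = (\<integral>\<^sup>+t. LS X t \<partial>lborel)"
proof -
  have qm[measurable]: "quantile M X \<in> borel_measurable borel" by (rule quantile_measurable[OF X])
  have "Vobj m M X = (\<integral>\<^sup>+z. indicator {0..1} z * e2ennreal (quantile M X z) \<partial>m)"
    unfolding Vobj_def by (simp add: mult.commute)
  also have "\<dots> = (\<integral>\<^sup>+t. LS X t \<partial>lborel)"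
    unfolding LS_def
    by (rule layer_cake[OF mP.sigma_finite_measure_axioms]) (simp_all add: measurable_cong_sets[OF m_sets refl])
  finally show ?thesis .
qed

lemma RS_layer:
  assumes X: "X \<in> borel_measurable M"
  shows "(\<integral>\<^sup>+t. RS X t \<partial>lborel) = (\<integral>\<^sup>+\<omega>. ennreal (\<rho> \<omega>) * ennreal (X \<omega>) \<partial>M)"
  unfolding RS_def
  by (rule layer_cake[OF sigma_finite_measure_axioms, symmetric]) (use X in measurable)

lemma RS_meas:
  assumes X: "X \<in> borel_measurable M"
  shows "RS X \<in> borel_measurable lborel"
  unfolding RS_def
  by (rule sigma_finite_measure.borel_measurable_nn_integral[OF sigma_finite_measure_axioms]) (use X in measurable)

lemma LS_meas:
  assumes X: "X \<in> borel_measurable M"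
  shows "LS X \<in> borel_measurable lborel"
proof -
  have qm[measurable]: "quantile M X \<in> borel_measurable borel" by (rule quantile_measurable[OF X])
  have eqs: "lborel \<Otimes>\<^sub>M m \<rightarrow>\<^sub>M (borel::ennreal measure) = lborel \<Otimes>\<^sub>M (borel::real measure) \<rightarrow>\<^sub>M borel"
    by (rule measurable_cong_sets) (auto intro!: sets_pair_measure_cong simp: m_sets)
  show ?thesis
  unfolding LS_def
  by (rule sigma_finite_measure.borel_measurable_nn_integral[OF mP.sigma_finite_measure_axioms])
     (unfold eqs, measurable)
qed

lemma feasible_int:
  assumes f: "feasible M \<rho> x X"
  shows "(\<integral>\<^sup>+\<omega>. ennreal (\<rho> \<omega>) * ennreal (X \<omega>) \<partial>M) \<le> ennreal x"
proof -
  have "(\<integral>\<^sup>+\<omega>. ennreal (\<rho> \<omega>) * ennreal (X \<omega>) \<partial>M) = (\<integral>\<^sup>+\<omega>. ennreal (\<rho> \<omega> * X \<omega>) \<partial>M)"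
  proof (rule nn_integral_cong_AE)
    show "AE \<omega> in M. ennreal (\<rho> \<omega>) * ennreal (X \<omega>) = ennreal (\<rho> \<omega> * X \<omega>)"
    proof -
      have "AE \<omega> in M. 0 \<le> X \<omega>" using f by (simp add: feasible_def)
      then show ?thesis using rho_pos by eventually_elim (simp add: ennreal_mult)
    qed
  qed
  also have "\<dots> \<le> ennreal x" using f by (simp add: feasible_def)
  finally show ?thesis .
qed

lemma V_le:
  assumes g: "\<gamma> = ereal g" "0 \<le> g" and f: "feasible M \<rho> x X"
  shows "Vobj m M X \<le> ennreal (max (1/\<delta>) g) * ennreal x"
proof -
  have X: "X \<in> borel_measurable M" using f by (simp add: feasible_def)
  have "Vobj m M X = (\<integral>\<^sup>+t. LS X t \<partial>lborel)" by (rule Vobj_layer[OF X])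
  also have "\<dots> \<le> (\<integral>\<^sup>+t. ennreal (max (1/\<delta>) g) * RS X t \<partial>lborel)"
  proof (rule nn_integral_mono)
    fix t show "LS X t \<le> ennreal (max (1/\<delta>) g) * RS X t"
    proof (cases "0 \<le> t")
      case True then show ?thesis by (rule pointwise[OF g X])
    next
      case False then show ?thesis by (simp add: LS_def)
    qed
  qed
  also have "\<dots> = ennreal (max (1/\<delta>) g) * (\<integral>\<^sup>+t. RS X t \<partial>lborel)"
    by (rule nn_integral_cmult[OF RS_meas[OF X]])
  also have "\<dots> \<le> ennreal (max (1/\<delta>) g) * ennreal x"
    using RS_layer[OF X] feasible_int[OF f] by (auto intro!: mult_left_mono)
  finally show ?thesis .
qed

lemma V_less:
  assumes g: "\<gamma> = ereal g" "0 \<le> g" and gt: "1/\<delta> < g"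
    and na: "\<forall>c\<in>{0<..<1}. zeta m M \<rho> c \<noteq> g"
    and f: "feasible M \<rho> x X" and x: "x > 0"
  shows "Vobj m M X < ennreal g * ennreal x"
proof -
  have X: "X \<in> borel_measurable M" using f by (simp add: feasible_def)
  have d: "\<delta> > 0" by (rule delta_pos)
  have gpos: "g > 0" using gt d by (meson divide_pos_pos less_trans zero_less_one)
  have mx: "max (1/\<delta>) g = g" using gt by simp
  show ?thesis
  proof (cases "AE t in lborel. ennreal g * RS X t \<le> LS X t")
    case True
    have "AE t in lborel. LS X t = 0"
      using True
    proof eventually_elim
      case (elim t)
      show ?case
      proof (cases "0 \<le> t \<and> cdfX M X t < 1")
        case True
        then show ?thesis using pointwise_strict[OF g gt na X] elim by force
      next
        case False
        then show ?thesis using LS_zero[OF X, of t] by (auto simp: LS_def)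
      qed
    qed
    then have "(\<integral>\<^sup>+t. LS X t \<partial>lborel) = 0" by (simp add: nn_integral_0_iff_AE[OF LS_meas[OF X]])
    then have "Vobj m M X = 0" using Vobj_layer[OF X] by simp
    then show ?thesis using gpos x by (simp add: ennreal_mult[symmetric])
  next
    case False
    have "Vobj m M X = (\<integral>\<^sup>+t. LS X t \<partial>lborel)" by (rule Vobj_layer[OF X])
    also have "\<dots> < (\<integral>\<^sup>+t. ennreal g * RS X t \<partial>lborel)"
    proof (rule nn_integral_less)
      show "LS X \<in> borel_measurable lborel" by (rule LS_meas[OF X])
      show "(\<lambda>t. ennreal g * RS X t) \<in> borel_measurable lborel" using RS_meas[OF X] by measurable
      have "(\<integral>\<^sup>+t. LS X t \<partial>lborel) = Vobj m M X" by (rule Vobj_layer[OF X, symmetric])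
      also have "\<dots> \<le> ennreal (max (1/\<delta>) g) * ennreal x" by (rule V_le[OF g f])
      finally show "(\<integral>\<^sup>+t. LS X t \<partial>lborel) \<noteq> \<infinity>"
        by (auto simp: ennreal_mult_eq_top_iff top_unique)
      show "AE t in lborel. LS X t \<le> ennreal g * RS X t"
      proof (rule AE_I2)
        fix t show "LS X t \<le> ennreal g * RS X t"
          using pointwise[OF g X, of t] mx by (cases "0 \<le> t") (auto simp: LS_def)
      qed
      show "\<not> (AE t in lborel. ennreal g * RS X t \<le> LS X t)" by (rule False)
    qed
    also have "\<dots> = ennreal g * (\<integral>\<^sup>+t. RS X t \<partial>lborel)"
      by (rule nn_integral_cmult[OF RS_meas[OF X]])
    also have "\<dots> \<le> ennreal g * ennreal x"
      using RS_layer[OF X] feasible_int[OF f] by (auto intro!: mult_left_mono)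
    finally show ?thesis .
  qed
qed

lemma Vobj_digital_zeta:
  assumes x: "x > 0" and c: "0 < c" "c < 1"
  shows "Vobj m M (digital M \<rho> x (Q (1 - c))) = ennreal (x * zeta m M \<rho> c)"
proof -
  have e: "eB (Q (1 - c)) > 0" using eB_pos[of "1 - c"] c by simp
  have "Vobj m M (digital M \<rho> x (Q (1 - c))) = ennreal (x / eB (Q (1 - c))) * emeasure m {c..1}"
    using Vobj_digital[OF x, of "1 - c", OF _ _ m_sets] c by simp
  also have "\<dots> = ennreal (x / eB (Q (1 - c)) * measure m {c..1})"
    using x e by (simp add: em_ennreal ennreal_mult[symmetric])
  also have "x / eB (Q (1 - c)) * measure m {c..1} = x * zeta m M \<rho> c"
    using measure_eq_zeta[OF c] e by simp
  finally show ?thesis .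
qed

lemma Vobj_const:
  assumes a: "a > 0"
  shows "Vobj m M (\<lambda>_. a) = ennreal a"
proof -
  have "Vobj m M (\<lambda>_. a) = ennreal a * emeasure m {0..1}"
  proof (rule Vobj_step[OF _ _ _ a _ m_sets])
    fix t show "cdfX M (\<lambda>_. a) t = (if t < 0 then 0 else if t < a then 0 else 1)"
      using a by (auto simp: cdfX_def prob_space)
  qed auto
  then show ?thesis using em01 by simp
qed

end

context setting2
begin

interpretation mP: prob_space m by (rule m_prob)

lemma essinf_le_Q:
  assumes p: "0 < p" "p < 1"
  shows "essinf M \<rho> \<le> ereal (Q p)"
  unfolding essinf_def
proof (rule Sup_least)
  fix z assume "z \<in> {z. AE \<omega> in M. z \<le> ereal (\<rho> \<omega>)}"
  then have z: "AE \<omega> in M. z \<le> ereal (\<rho> \<omega>)" by simp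
  show "z \<le> ereal (Q p)"
  proof (cases z)
    case (real r)
    show ?thesis unfolding real
    proof (subst ereal_less_eq(3), rule dense_le)
      fix s assume "s < r"
      have "AE \<omega> in M. \<omega> \<notin> {\<omega>\<in>space M. \<rho> \<omega> \<le> s}"
        using z by eventually_elim (use \<open>s < r\<close> real in auto)
      then have "F s = 0" unfolding cdfX_def by (subst prob_eq_0) auto
      then show "s \<le> Q p" using le_Qf[OF rho_meas p(2), of s] p by simp
    qed
  next
    case PInf
    have "AE \<omega> in M. False" using z by eventually_elim (use PInf in simp)
    then show ?thesis by simp
  qed simp
qed

lemma Q_to_essinf:
  assumes p: "\<And>n. 0 < p n" "\<And>n. p n < 1" and lim: "p \<longlonglongrightarrow> 0"
  shows "(\<lambda>n. ereal (Q (p n))) \<longlonglongrightarrow> essinf M \<rho>"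
proof (rule order_tendstoI)
  fix a assume "a < essinf M \<rho>"
  show "eventually (\<lambda>n. a < ereal (Q (p n))) sequentially"
  proof (rule always_eventually, rule allI)
    fix n show "a < ereal (Q (p n))"
      using \<open>a < essinf M \<rho>\<close> essinf_le_Q[OF p(1)[of n] p(2)[of n]] by (rule less_le_trans)
  qed
next
  fix a assume a: "essinf M \<rho> < a"
  obtain s where s: "essinf M \<rho> < ereal s" "ereal s < a" using ereal_dense2[OF a] by blast
  have notAE: "\<not> (AE \<omega> in M. ereal s \<le> ereal (\<rho> \<omega>))"
  proof
    assume "AE \<omega> in M. ereal s \<le> ereal (\<rho> \<omega>)"
    then have "ereal s \<le> essinf M \<rho>" unfolding essinf_def by (intro Sup_upper) simp
    with s show False by simp
  qed
  have "prob {\<omega>\<in>space M. \<rho> \<omega> < s} \<noteq> 0"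
  proof
    assume "prob {\<omega>\<in>space M. \<rho> \<omega> < s} = 0"
    then have "AE \<omega> in M. \<omega> \<notin> {\<omega>\<in>space M. \<rho> \<omega> < s}" by (subst (asm) prob_eq_0) auto
    with AE_space have "AE \<omega> in M. ereal s \<le> ereal (\<rho> \<omega>)" by eventually_elim auto
    with notAE show False by simp
  qed
  moreover have "prob {\<omega>\<in>space M. \<rho> \<omega> < s} \<le> F s"
    unfolding cdfX_def by (intro finite_measure_mono) auto
  ultimately have Fs: "F s > 0" using measure_nonneg[of M "{\<omega>\<in>space M. \<rho> \<omega> < s}"] by linarith
  have "eventually (\<lambda>n. p n < F s) sequentially" using order_tendstoD(2)[OF lim Fs] .
  then show "eventually (\<lambda>n. ereal (Q (p n)) < a) sequentially"
  proof eventually_elim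
    case (elim n)
    then have "Q (p n) \<le> s" using Qf_le[OF rho_meas p(1)[of n]] by simp
    then have "ereal (Q (p n)) \<le> ereal s" by simp
    then show ?case using s(2) by (rule le_less_trans)
  qed
qed

lemma eB_mono:
  assumes "\<beta> \<le> \<beta>'"
  shows "eB \<beta> \<le> eB \<beta>'"
  unfolding eB_def
proof (rule integral_mono_AE[OF integrable_rho_ind integrable_rho_ind])
  show "AE \<omega> in M. \<rho> \<omega> * indicator {\<omega>' \<in> space M. \<rho> \<omega>' \<le> \<beta>} \<omega>
      \<le> \<rho> \<omega> * indicator {\<omega>' \<in> space M. \<rho> \<omega>' \<le> \<beta>'} \<omega>"
    using rho_pos
  proof eventually_elim
    case (elim \<omega>)
    show ?case
    proof (cases "\<omega> \<in> space M")
      case True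
      then show ?thesis using elim assms by (simp add: indicator_def)
    qed (simp add: indicator_def)
  qed
qed

lemma zeta_bound:
  assumes c0: "0 < c0" "c0 < 1" and c: "0 < c" "c \<le> c0"
  shows "zeta m M \<rho> c \<le> 1 / eB (Q (1 - c0))"
proof -
  have e0: "eB (Q (1 - c0)) > 0" using eB_pos[of "1 - c0"] c0 by simp
  have "eB (Q (1 - c0)) \<le> eB (Q (1 - c))" using c c0 by (intro eB_mono Q_mono) auto
  moreover have "measure m {c..1} \<le> 1" by simp
  moreover have "measure m {c..1} / eB (Q (1 - c)) \<le> 1 / eB (Q (1 - c0))"
    by (rule frac_le) (use calculation e0 in auto)
  ultimately show ?thesis using zeta_eq[of c] c c0 by simp
qed


lemma opt_ge: "feasible M \<rho> x X \<Longrightarrow> Vobj m M X \<le> optval m M \<rho> x"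
  unfolding optval_def by (rule SUP_upper) simp

lemma opt_le: "(\<And>X. feasible M \<rho> x X \<Longrightarrow> Vobj m M X \<le> B) \<Longrightarrow> optval m M \<rho> x \<le> B"
  unfolding optval_def by (rule SUP_least) simp

lemma Q_real: "0 < c \<Longrightarrow> c < 1 \<Longrightarrow> real_of_ereal (quantile M \<rho> (1 - c)) = Q (1 - c)"
  by (simp add: quantile_in01)

lemma lb_digital:
  assumes x: "x > 0" and c: "0 < c" "c < 1"
  shows "ennreal (x * zeta m M \<rho> c) \<le> optval m M \<rho> x"
proof -
  have "feasible M \<rho> x (digital M \<rho> x (Q (1 - c)))" using digital_feasible[OF x, of "1 - c"] c by simp
  then have "Vobj m M (digital M \<rho> x (Q (1 - c))) \<le> optval m M \<rho> x" by (rule opt_ge)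
  then show ?thesis using Vobj_digital_zeta[OF x c] by simp
qed

lemma lb_const:
  assumes x: "x > 0"
  shows "ennreal (x / \<delta>) \<le> optval m M \<rho> x"
proof -
  have d: "\<delta> > 0" by (rule delta_pos)
  have "Vobj m M (\<lambda>_. x / \<delta>) \<le> optval m M \<rho> x" by (rule opt_ge[OF const_feasible[OF x]])
  then show ?thesis using Vobj_const[of "x / \<delta>"] x d by simp
qed

lemma gamma_le_of_opt:
  assumes x: "x > 0" and r: "optval m M \<rho> x = ennreal r" "0 \<le> r"
  shows "\<gamma> \<le> ereal (r / x)"
  unfolding gammastar_def
proof (rule SUP_least)
  fix c :: real assume "c \<in> {0<..<1}"
  then have "ennreal (x * zeta m M \<rho> c) \<le> ennreal r" using lb_digital[OF x, of c] r by simp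
  then have "x * zeta m M \<rho> c \<le> r" using r(2) by (simp add: ennreal_le_iff)
  then have "zeta m M \<rho> c \<le> r / x" using x by (simp add: le_divide_eq mult.commute)
  then show "ereal (zeta m M \<rho> c) \<le> ereal (r / x)" by simp
qed

lemma optval_fin:
  assumes x: "x > 0" and g: "\<gamma> = ereal g" "0 \<le> g"
  shows "optval m M \<rho> x = ennreal (max (1/\<delta>) g * x)"
proof (rule antisym)
  have d: "\<delta> > 0" by (rule delta_pos)
  have mx: "0 \<le> max (1/\<delta>) g" using g by simp
  show ub: "optval m M \<rho> x \<le> ennreal (max (1/\<delta>) g * x)"
    using V_le[OF g] mx x by (intro opt_le) (simp add: ennreal_mult)
  define r where "r = enn2real (optval m M \<rho> x)"
  have fin: "optval m M \<rho> x \<noteq> \<top>" using ub by (auto simp: top_unique)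
  then have O: "optval m M \<rho> x = ennreal r" "0 \<le> r" by (simp_all add: r_def ennreal_enn2real less_top)
  have "x / \<delta> \<le> r" using lb_const[OF x] O by (simp add: ennreal_le_iff)
  moreover have "g * x \<le> r"
  proof -
    have "ereal g \<le> ereal (r / x)" using gamma_le_of_opt[OF x O] g by simp
    then show ?thesis using x by (simp add: le_divide_eq)
  qed
  ultimately have "max (1/\<delta>) g * x \<le> r" by (auto simp: max_def)
  then show "ennreal (max (1/\<delta>) g * x) \<le> optval m M \<rho> x" using O by (simp add: ennreal_leI)
qed

lemma optval_inf:
  assumes x: "x > 0" and g: "\<gamma> = \<infinity>"
  shows "optval m M \<rho> x = \<top>"
proof (rule ccontr)
  assume fin: "optval m M \<rho> x \<noteq> \<top>"
  define r where "r = enn2real (optval m M \<rho> x)"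
  then have O: "optval m M \<rho> x = ennreal r" "0 \<le> r" using fin by (simp_all add: r_def ennreal_enn2real less_top)
  show False using gamma_le_of_opt[OF x O] g by simp
qed


lemma part_i:
  assumes x: "x > 0" and g: "\<gamma> = \<infinity>"
  shows "\<exists>\<beta>::nat \<Rightarrow> real. (\<lambda>n. ereal (\<beta> n)) \<longlonglongrightarrow> essinf M \<rho>
            \<and> (\<forall>n. feasible M \<rho> x (digital M \<rho> x (\<beta> n)))
            \<and> (\<lambda>n. Vobj m M (digital M \<rho> x (\<beta> n))) \<longlonglongrightarrow> \<infinity>"
proof -
  have ex: "\<exists>c. 0 < c \<and> c < 1 \<and> real n < zeta m M \<rho> c \<and> 1 - 1 / (real n + 2) < c" for n
  proof -
    define c0 where "c0 = 1 - 1 / (real n + 2)"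
    have c0: "0 < c0" "c0 < 1" by (auto simp: c0_def field_simps)
    define R where "R = max (real n) (1 / eB (Q (1 - c0)))"
    have "ereal R < \<gamma>" using g by simp
    then obtain c where c: "c \<in> {0<..<1}" "ereal R < ereal (zeta m M \<rho> c)"
      unfolding gammastar_def by (auto simp: less_SUP_iff)
    have "c0 < c"
    proof (rule ccontr)
      assume "\<not> c0 < c"
      then have "zeta m M \<rho> c \<le> 1 / eB (Q (1 - c0))" using zeta_bound[OF c0, of c] c by simp
      then show False using c by (simp add: R_def)
    qed
    then show ?thesis using c by (auto simp: R_def c0_def)
  qed
  then obtain cs where cs: "\<And>n. 0 < cs n" "\<And>n. cs n < 1" "\<And>n. real n < zeta m M \<rho> (cs n)"
      "\<And>n. 1 - 1 / (real n + 2) < cs n"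
    by metis
  define p where "p n = 1 - cs n" for n
  have p: "\<And>n. 0 < p n" "\<And>n. p n < 1" using cs by (auto simp: p_def)
  have plim: "p \<longlonglongrightarrow> 0"
  proof (rule tendsto_sandwich[OF _ _ tendsto_const LIMSEQ_inverse_real_of_nat])
    show "eventually (\<lambda>n. 0 \<le> p n) sequentially"
      by (intro always_eventually allI) (simp add: less_imp_le[OF p(1)])
    show "eventually (\<lambda>n. p n \<le> inverse (real (Suc n))) sequentially"
    proof (rule always_eventually, rule allI)
      fix n
      have "p n < 1 / (real n + 2)" using cs(4)[of n] by (simp add: p_def)
      also have "\<dots> \<le> inverse (real (Suc n))" by (simp add: inverse_eq_divide frac_le)
      finally show "p n \<le> inverse (real (Suc n))" by simp
    qed
  qed
  have Qc: "Q (1 - cs n) = Q (p n)" for n by (simp add: p_def)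
  show ?thesis
  proof (intro exI conjI allI)
    show "(\<lambda>n. ereal (Q (1 - cs n))) \<longlonglongrightarrow> essinf M \<rho>"
      unfolding Qc by (rule Q_to_essinf[OF p plim])
    fix n show "feasible M \<rho> x (digital M \<rho> x (Q (1 - cs n)))"
      unfolding Qc by (rule digital_feasible[OF x p(1) p(2)])
  next
    have V: "Vobj m M (digital M \<rho> x (Q (1 - cs n))) = ennreal (x * zeta m M \<rho> (cs n))" for n
      by (rule Vobj_digital_zeta[OF x cs(1) cs(2)])
    show "(\<lambda>n. Vobj m M (digital M \<rho> x (Q (1 - cs n)))) \<longlonglongrightarrow> \<infinity>"
      unfolding V
    proof (rule order_tendstoI)
      fix a :: ennreal assume "a < \<infinity>"
      then obtain r where r: "a = ennreal r" "0 \<le> r" by (cases a) auto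
      obtain N :: nat where N: "r / x < real N" using reals_Archimedean2 by blast
      show "eventually (\<lambda>n. a < ennreal (x * zeta m M \<rho> (cs n))) sequentially"
        unfolding eventually_sequentially
      proof (intro exI allI impI)
        fix n assume "N \<le> n"
        then have "r / x < real n" using N by linarith
        then have "r < x * real n" using x by (simp add: divide_less_eq mult.commute)
        also have "\<dots> < x * zeta m M \<rho> (cs n)" using cs(3)[of n] x by simp
        finally show "a < ennreal (x * zeta m M \<rho> (cs n))" using r by (simp add: ennreal_less_iff)
      qed
    qed simp
  qed
qed

lemma part_ii:
  assumes x: "x > 0" and g: "\<gamma> \<le> ereal (1 / \<delta>)"
  shows "optimal m M \<rho> x (\<lambda>_. x / \<delta>)"
proof -
  have d: "\<delta> > 0" by (rule delta_pos)
  have "\<gamma> \<noteq> \<infinity>" using g by auto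
  then obtain g' where g': "\<gamma> = ereal g'" "0 \<le> g'" by (rule gamma_real)
  have mx: "max (1/\<delta>) g' = 1/\<delta>" using g g' by simp
  show ?thesis unfolding optimal_def
  proof (intro conjI allI impI)
    show "feasible M \<rho> x (\<lambda>_. x / \<delta>)" by (rule const_feasible[OF x])
    fix Y assume "feasible M \<rho> x Y"
    then have "Vobj m M Y \<le> ennreal (1/\<delta>) * ennreal x" using V_le[OF g'] mx by simp
    also have "\<dots> = Vobj m M (\<lambda>_. x / \<delta>)" using Vobj_const[of "x/\<delta>"] x d
      by (simp add: ennreal_mult[symmetric])
    finally show "Vobj m M Y \<le> Vobj m M (\<lambda>_. x / \<delta>)" .
  qed
qed

lemma part_iii:
  assumes x: "x > 0" and c: "c \<in> {0<..<1}" and gt: "ereal (1 / \<delta>) < \<gamma>"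
    and att: "ereal (zeta m M \<rho> c) = \<gamma>"
  shows "optimal m M \<rho> x (digital M \<rho> x (real_of_ereal (quantile M \<rho> (1 - c))))"
proof -
  have c': "0 < c" "c < 1" using c by auto
  let ?g = "zeta m M \<rho> c"
  have g: "\<gamma> = ereal ?g" "0 \<le> ?g" using att zeta_nonneg[OF c'] by auto
  have mx: "max (1/\<delta>) ?g = ?g" using gt g by simp
  show ?thesis unfolding optimal_def Q_real[OF c']
  proof (intro conjI allI impI)
    show "feasible M \<rho> x (digital M \<rho> x (Q (1 - c)))" using digital_feasible[OF x, of "1 - c"] c' by simp
    fix Y assume "feasible M \<rho> x Y"
    then have "Vobj m M Y \<le> ennreal ?g * ennreal x" using V_le[OF g] mx by simp
    also have "\<dots> = Vobj m M (digital M \<rho> x (Q (1 - c)))"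
      using Vobj_digital_zeta[OF x c'] x g by (simp add: ennreal_mult[symmetric] mult.commute)
    finally show "Vobj m M Y \<le> Vobj m M (digital M \<rho> x (Q (1 - c)))" .
  qed
qed

lemma part_iv:
  assumes x: "x > 0" and gt: "ereal (1 / \<delta>) < \<gamma>" and lt: "\<gamma> < \<infinity>"
    and na: "\<not> (\<exists>c\<in>{0<..<1}. ereal (zeta m M \<rho> c) = \<gamma>)"
  shows "(\<nexists>X. optimal m M \<rho> x X)
            \<and> (\<forall>cs::nat \<Rightarrow> real. (\<forall>n. cs n \<in> {0<..<1})
                  \<and> (\<lambda>n. ereal (zeta m M \<rho> (cs n))) \<longlonglongrightarrow> \<gamma>
               \<longrightarrow> (\<forall>n. feasible M \<rho> x (digital M \<rho> x (real_of_ereal (quantile M \<rho> (1 - cs n)))))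
                 \<and> (\<lambda>n. Vobj m M (digital M \<rho> x (real_of_ereal (quantile M \<rho> (1 - cs n)))))
                      \<longlonglongrightarrow> optval m M \<rho> x)"
proof -
  have "\<gamma> \<noteq> \<infinity>" using lt by simp
  then obtain g where g: "\<gamma> = ereal g" "0 \<le> g" by (rule gamma_real)
  have gt': "1/\<delta> < g" using gt g by simp
  have mx: "max (1/\<delta>) g = g" using gt' by simp
  have na': "\<forall>c\<in>{0<..<1}. zeta m M \<rho> c \<noteq> g" using na g by auto
  have O: "optval m M \<rho> x = ennreal (g * x)" using optval_fin[OF x g] mx by simp
  show ?thesis
  proof (intro conjI allI impI)
    show "\<nexists>X. optimal m M \<rho> x X"
    proof
      assume "\<exists>X. optimal m M \<rho> x X"
      then obtain X where X: "feasible M \<rho> x X" "\<And>Y. feasible M \<rho> x Y \<Longrightarrow> Vobj m M Y \<le> Vobj m M X"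
        unfolding optimal_def by blast
      have "optval m M \<rho> x \<le> Vobj m M X" by (rule opt_le) (rule X(2))
      also have "\<dots> < ennreal g * ennreal x" by (rule V_less[OF g gt' na' X(1) x])
      also have "\<dots> = optval m M \<rho> x" using O g x by (simp add: ennreal_mult[symmetric])
      finally show False by simp
    qed
  next
    fix cs :: "nat \<Rightarrow> real" and n :: nat
    assume cs: "(\<forall>n. cs n \<in> {0<..<1}) \<and> (\<lambda>n. ereal (zeta m M \<rho> (cs n))) \<longlonglongrightarrow> \<gamma>"
    have c': "0 < cs n" "cs n < 1" for n using cs by auto
    have Qeq: "real_of_ereal (quantile M \<rho> (1 - cs n)) = Q (1 - cs n)" for n by (rule Q_real[OF c'])
    show "feasible M \<rho> x (digital M \<rho> x (real_of_ereal (quantile M \<rho> (1 - cs n))))"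
      unfolding Qeq using digital_feasible[OF x] c' by simp
  next
    fix cs :: "nat \<Rightarrow> real"
    assume cs: "(\<forall>n. cs n \<in> {0<..<1}) \<and> (\<lambda>n. ereal (zeta m M \<rho> (cs n))) \<longlonglongrightarrow> \<gamma>"
    have c': "0 < cs n" "cs n < 1" for n using cs by auto
    have Qeq: "real_of_ereal (quantile M \<rho> (1 - cs n)) = Q (1 - cs n)" for n by (rule Q_real[OF c'])
    have zlim: "(\<lambda>n. zeta m M \<rho> (cs n)) \<longlonglongrightarrow> g" using cs g by (simp add: lim_ereal)
    have "(\<lambda>n. ennreal (x * zeta m M \<rho> (cs n))) \<longlonglongrightarrow> ennreal (x * g)"
      by (intro tendsto_ennrealI tendsto_mult tendsto_const zlim)
    then show "(\<lambda>n. Vobj m M (digital M \<rho> x (real_of_ereal (quantile M \<rho> (1 - cs n))))) \<longlonglongrightarrow> optval m M \<rho> x"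
      unfolding Qeq Vobj_digital_zeta[OF x c'] O by (simp add: mult.commute)
  qed
qed

end
theorem theorem1:
  fixes M :: "'a measure" and \<rho> :: "'a \<Rightarrow> real" and m :: "real measure" and x :: real
  assumes "prob_space M"
    and "\<rho> \<in> borel_measurable M"
    and "AE \<omega> in M. \<rho> \<omega> > 0"
    and "integrable M \<rho>"
    and "continuous_on UNIV (cdfX M \<rho>)"
    and "prob_space m" and "sets m = sets borel" and "measure m {0..1} = 1"
    and "x > 0"
  defines "\<delta> \<equiv> (\<integral>\<omega>. \<rho> \<omega> \<partial>M)"
    and "\<gamma> \<equiv> gammastar m M \<rho>"
  shows "enn2ereal (optval m M \<rho> x) = max (ereal (1 / \<delta>)) \<gamma> * ereal x
    \<and> (\<gamma> = \<infinity> \<longrightarrow> (\<exists>\<beta>::nat \<Rightarrow> real. (\<lambda>n. ereal (\<beta> n)) \<longlonglongrightarrow> essinf M \<rho>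
            \<and> (\<forall>n. feasible M \<rho> x (digital M \<rho> x (\<beta> n)))
            \<and> (\<lambda>n. Vobj m M (digital M \<rho> x (\<beta> n))) \<longlonglongrightarrow> \<infinity>))
    \<and> (\<gamma> \<le> ereal (1 / \<delta>) \<longrightarrow> optimal m M \<rho> x (\<lambda>_. x / \<delta>))
    \<and> (\<forall>c\<in>{0<..<1}. ereal (1 / \<delta>) < \<gamma> \<and> \<gamma> < \<infinity> \<and> ereal (zeta m M \<rho> c) = \<gamma>
          \<longrightarrow> optimal m M \<rho> x (digital M \<rho> x (real_of_ereal (quantile M \<rho> (1 - c)))))
    \<and> (ereal (1 / \<delta>) < \<gamma> \<and> \<gamma> < \<infinity> \<and> \<not> (\<exists>c\<in>{0<..<1}. ereal (zeta m M \<rho> c) = \<gamma>)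
          \<longrightarrow> (\<nexists>X. optimal m M \<rho> x X)
            \<and> (\<forall>cs::nat \<Rightarrow> real. (\<forall>n. cs n \<in> {0<..<1})
                  \<and> (\<lambda>n. ereal (zeta m M \<rho> (cs n))) \<longlonglongrightarrow> \<gamma>
               \<longrightarrow> (\<forall>n. feasible M \<rho> x (digital M \<rho> x (real_of_ereal (quantile M \<rho> (1 - cs n)))))
                 \<and> (\<lambda>n. Vobj m M (digital M \<rho> x (real_of_ereal (quantile M \<rho> (1 - cs n)))))
                      \<longlonglongrightarrow> optval m M \<rho> x))"
proof -
  have "setting2 M \<rho> m"
    unfolding setting2_def setting2_axioms_def setting_def setting_axioms_def using assms by auto
  then interpret S: setting2 M \<rho> m .
  have x: "x > 0" by fact
  have d: "\<delta> > 0" unfolding \<delta>_def by (rule S.delta_pos)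
  have P0: "enn2ereal (optval m M \<rho> x) = max (ereal (1 / \<delta>)) \<gamma> * ereal x"
  proof (cases "\<gamma> = \<infinity>")
    case True
    then show ?thesis using S.optval_inf[OF x] x unfolding \<gamma>_def by simp
  next
    case False
    then obtain g where g: "\<gamma> = ereal g" "0 \<le> g" unfolding \<gamma>_def by (rule S.gamma_real)
    have "optval m M \<rho> x = ennreal (max (1/\<delta>) g * x)"
      using S.optval_fin[OF x] g unfolding \<gamma>_def \<delta>_def by simp
    moreover have "0 \<le> max (1/\<delta>) g * x" using g x by simp
    ultimately show ?thesis using g by (simp add: max_def)
  qed
  have P1: "\<gamma> = \<infinity> \<longrightarrow> (\<exists>\<beta>::nat \<Rightarrow> real. (\<lambda>n. ereal (\<beta> n)) \<longlonglongrightarrow> essinf M \<rho>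
            \<and> (\<forall>n. feasible M \<rho> x (digital M \<rho> x (\<beta> n)))
            \<and> (\<lambda>n. Vobj m M (digital M \<rho> x (\<beta> n))) \<longlonglongrightarrow> \<infinity>)"
    using S.part_i[OF x] unfolding \<gamma>_def by simp
  have P2: "\<gamma> \<le> ereal (1 / \<delta>) \<longrightarrow> optimal m M \<rho> x (\<lambda>_. x / \<delta>)"
    using S.part_ii[OF x] unfolding \<gamma>_def \<delta>_def by simp
  have P3: "\<forall>c\<in>{0<..<1}. ereal (1 / \<delta>) < \<gamma> \<and> \<gamma> < \<infinity> \<and> ereal (zeta m M \<rho> c) = \<gamma>
          \<longrightarrow> optimal m M \<rho> x (digital M \<rho> x (real_of_ereal (quantile M \<rho> (1 - c))))"
    using S.part_iii[OF x] unfolding \<gamma>_def \<delta>_def by simp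
  have P4: "ereal (1 / \<delta>) < \<gamma> \<and> \<gamma> < \<infinity> \<and> \<not> (\<exists>c\<in>{0<..<1}. ereal (zeta m M \<rho> c) = \<gamma>)
          \<longrightarrow> (\<nexists>X. optimal m M \<rho> x X)
            \<and> (\<forall>cs::nat \<Rightarrow> real. (\<forall>n. cs n \<in> {0<..<1})
                  \<and> (\<lambda>n. ereal (zeta m M \<rho> (cs n))) \<longlonglongrightarrow> \<gamma>
               \<longrightarrow> (\<forall>n. feasible M \<rho> x (digital M \<rho> x (real_of_ereal (quantile M \<rho> (1 - cs n)))))
                 \<and> (\<lambda>n. Vobj m M (digital M \<rho> x (real_of_ereal (quantile M \<rho> (1 - cs n)))))
                      \<longlonglongrightarrow> optval m M \<rho> x)"
    using S.part_iv[OF x] unfolding \<gamma>_def \<delta>_def by blast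
  show ?thesis
    by (rule conjI[OF P0 conjI[OF P1 conjI[OF P2 conjI[OF P3 P4]]]])
qed

end
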